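(* Let $P(x)=\frac1\pi\frac1{1+x^2}$, $P_k(x)=kP(kx)$ for $k=1,2,\dots$, and $\langle T_k,\varphi\rangle=\int_{\mathbb{R}}\varphi(x)P_k(x)\,dx$. Let $\Pi_k$ be the Borel measure on $\mathbb{R}^2$ with $\Pi_k(A)=\iint_A\mathcal{X}_{[-1/k,1/k]}(x-y)\,dx\,dy$ and $\langle\!\langle S_k,\Theta\rangle\!\rangle=\iint\Theta\,d\Pi_k$. For $\Phi\in\mathscr{C}_c(\mathbb{R}^2)$ let $Kir_k\Phi$ be the continuous function with $\int\varphi\,Kir_k\Phi\,P_k\,dx=\iint\varphi(x)\Phi(x,y)\,d\Pi_k(x,y)$ for all $\varphi\in\mathscr{C}_c(\mathbb{R})$. Then for every $x\in\mathbb{R}$, $$\lim_{k\to\infty}Kir_k\Phi(x)=2\pi x^2\Phi(x,x).$$ *)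

theory Defs
  imports "HOL-Analysis.Analysis"
begin

definition poisson :: "real \<Rightarrow> real" where
  "poisson x = (1 / pi) * (1 / (1 + x^2))"

definition poisson_k :: "nat \<Rightarrow> real \<Rightarrow> real" where
  "poisson_k k x = real k * poisson (real k * x)"

definition Cc :: "('a::real_normed_vector \<Rightarrow> real) \<Rightarrow> bool" where
  "Cc f \<longleftrightarrow> continuous_on UNIV f \<and> compact (closure {z. f z \<noteq> 0})"

definition Pi_k :: "nat \<Rightarrow> (real \<times> real) measure" where
  "Pi_k k = density lborel
     (\<lambda>(x, y). ennreal (indicator {- 1 / real k .. 1 / real k} (x - y)))"

end

theory Submission
  imports Defs
begin

lemma int_bound:
  fixes f :: "real \<Rightarrow> real"
  assumes f[measurable]: "f \<in> borel_measurable lborel"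
    and b: "\<And>s. \<bar>f s\<bar> \<le> e * indicator {a..b} s" and ab: "a \<le> b"
  shows "integrable lborel f" "\<bar>LINT s|lborel. f s\<bar> \<le> e * (b - a)"
proof -
  have ii: "integrable lborel (\<lambda>s. e * indicator {a..b} s)"
    by (intro integrable_mult_right integrable_real_indicator) (auto simp: emeasure_lborel_Icc_eq)
  show fi: "integrable lborel f"
  proof (rule Bochner_Integration.integrable_bound[OF ii f])
    show "AE x in lborel. norm (f x) \<le> norm (e * indicator {a..b} x)"
      using b by (auto intro!: AE_I2 order_trans[OF _ abs_ge_self])
  qed
  have "\<bar>LINT s|lborel. f s\<bar> \<le> (LINT s|lborel. e * indicator {a..b} s)"
    by (rule Bochner_Integration.integral_abs_bound_integral[OF fi ii b])
  also have "\<dots> = e * (b - a)"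
    using ab by (simp add: emeasure_lborel_Icc measure_lborel_Icc)
  finally show "\<bar>LINT s|lborel. f s\<bar> \<le> e * (b - a)" .
qed

lemma Cc_mult_integrable:
  fixes \<phi> :: "'a::euclidean_space \<Rightarrow> real"
  assumes "Cc \<phi>" "continuous_on UNIV f"
  shows "integrable lborel (\<lambda>x. \<phi> x * f x)"
proof -
  let ?C = "closure {z. \<phi> z \<noteq> 0}"
  have c: "compact ?C" "continuous_on UNIV \<phi>" using assms(1) unfolding Cc_def by auto
  have "integrable lborel (\<lambda>x. indicator ?C x *\<^sub>R (\<phi> x * f x))"
    by (rule borel_integrable_compact[OF c(1)])
       (intro continuous_intros continuous_on_subset[OF c(2)] continuous_on_subset[OF assms(2)]; simp)
  moreover have "(\<lambda>x. indicator ?C x *\<^sub>R (\<phi> x * f x)) = (\<lambda>x. \<phi> x * f x)"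
  proof
    fix x show "indicator ?C x *\<^sub>R (\<phi> x * f x) = \<phi> x * f x"
      using closure_subset[of "{z. \<phi> z \<noteq> 0}"] by (cases "x \<in> ?C") auto
  qed
  ultimately show ?thesis by simp
qed

lemma Cc_bounded:
  fixes \<phi> :: "'a::euclidean_space \<Rightarrow> real"
  assumes "Cc \<phi>"
  shows "\<exists>B>0. \<forall>z. \<bar>\<phi> z\<bar> \<le> B"
proof -
  let ?C = "closure {z. \<phi> z \<noteq> 0}"
  have c: "compact ?C" "continuous_on UNIV \<phi>" using assms(1) unfolding Cc_def by auto
  have c2: "continuous_on ?C \<phi>" using c(2) by (rule continuous_on_subset) simp
  have "compact (\<phi> ` ?C)"
    by (rule compact_continuous_image[OF c2 c(1)])
  then have "bounded (\<phi> ` ?C)" by (rule compact_imp_bounded)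
  then have "\<exists>b>0. \<forall>y\<in>\<phi> ` ?C. norm y \<le> b" by (simp only: bounded_pos)
  then obtain B where B: "B > 0" "\<And>y. y \<in> \<phi> ` ?C \<Longrightarrow> norm y \<le> B"
    by auto
  have "\<bar>\<phi> z\<bar> \<le> B" for z
  proof (cases "z \<in> ?C")
    case True
    then have "\<phi> z \<in> \<phi> ` ?C" by (rule imageI)
    then have "norm (\<phi> z) \<le> B" by (rule B(2))
    then show ?thesis by simp
  next
    case False
    have "{z. \<phi> z \<noteq> 0} \<subseteq> ?C" by (rule closure_subset)
    then have "\<phi> z = 0" using False by auto
    then show ?thesis using B by simp
  qed
  then show ?thesis using B(1) by auto
qed

definition tent :: "real \<Rightarrow> real \<Rightarrow> real \<Rightarrow> real" where
  "tent x0 r x = max 0 (r - \<bar>x - x0\<bar>)"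

lemma tent_Cc: "Cc (tent x0 r)"
proof -
  have "continuous_on UNIV (tent x0 r)" unfolding tent_def by (intro continuous_intros)
  moreover have "{z. tent x0 r z \<noteq> 0} \<subseteq> cball x0 \<bar>r\<bar>"
  proof
    fix z assume "z \<in> {z. tent x0 r z \<noteq> 0}"
    then have "r - \<bar>z - x0\<bar> > 0" unfolding tent_def by (cases "r - \<bar>z - x0\<bar> > 0") auto
    then show "z \<in> cball x0 \<bar>r\<bar>" unfolding mem_cball dist_real_def by linarith
  qed
  then have "closure {z. tent x0 r z \<noteq> 0} \<subseteq> cball x0 \<bar>r\<bar>"
    by (intro closure_minimal) auto
  then have "bounded (closure {z. tent x0 r z \<noteq> 0})"
    by (rule bounded_subset[OF bounded_cball])
  then have "compact (closure {z. tent x0 r z \<noteq> 0})"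
    by (simp add: compact_eq_bounded_closed)
  ultimately show ?thesis unfolding Cc_def by auto
qed

lemma cont_pos:
  fixes h :: "real \<Rightarrow> real"
  assumes hc: "continuous_on UNIV h"
    and z: "\<And>x0 r. r > 0 \<Longrightarrow> (LINT y|lborel. tent x0 r y * h y) = 0"
  shows "\<not> h x > 0"
proof
  assume hx: "h x > 0"
  define c where "c = h x / 2"
  have c: "c > 0" using hx by (simp add: c_def)
  have "\<exists>d>0. \<forall>y\<in>UNIV. dist y x < d \<longrightarrow> dist (h y) (h x) < c"
    using hc c unfolding continuous_on_iff by blast
  then obtain d where d: "d > 0" "\<forall>y. dist y x < d \<longrightarrow> dist (h y) (h x) < c"
    by blast
  have i1: "integrable lborel (\<lambda>y. tent x d y * h y)"
    by (rule Cc_mult_integrable[OF tent_Cc hc])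
  have i2: "integrable lborel (\<lambda>y. tent x d y * c)"
    by (rule Cc_mult_integrable[OF tent_Cc]) simp
  have i3: "integrable lborel (\<lambda>y. (c * (d/2)) * indicator {x - d/2..x + d/2} y)"
    by (intro integrable_mult_right integrable_real_indicator) (auto simp: emeasure_lborel_Icc_eq)
  have "(LINT y|lborel. (c * (d/2)) * indicator {x - d/2..x + d/2} y) \<le> (LINT y|lborel. tent x d y * c)"
  proof (rule integral_mono[OF i3 i2])
    fix y show "c * (d/2) * indicator {x - d/2..x + d/2} y \<le> tent x d y * c"
    proof (cases "y \<in> {x - d/2..x + d/2}")
      case True
      then have "\<bar>y - x\<bar> \<le> d/2" unfolding atLeastAtMost_iff abs_le_iff by linarith
      then have "d/2 \<le> tent x d y" unfolding tent_def by (auto simp: max_def)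
      then show ?thesis using True c by simp
    next
      case False then show ?thesis using c by (simp add: tent_def)
    qed
  qed
  also have "\<dots> \<le> (LINT y|lborel. tent x d y * h y)"
  proof (rule integral_mono[OF i2 i1])
    fix y show "tent x d y * c \<le> tent x d y * h y"
    proof (cases "\<bar>y - x\<bar> < d")
      case True
      then have "dist (h y) (h x) < c" using d(2) by (simp add: dist_real_def)
      then have "h y > c" unfolding dist_real_def c_def abs_less_iff by linarith
      moreover have "tent x d y \<ge> 0" by (simp add: tent_def)
      ultimately show ?thesis by (simp add: mult_left_mono)
    next
      case False then show ?thesis by (simp add: tent_def)
    qed
  qed
  also have "\<dots> = 0" using z d by simp
  finally have "(c * (d/2)) * d \<le> 0"
    using d by (simp add: measure_lborel_Icc)
  then show False using c d by (simp add: mult_le_0_iff)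
qed

lemma cont_zero:
  fixes h :: "real \<Rightarrow> real"
  assumes hc: "continuous_on UNIV h"
    and z: "\<And>x0 r. r > 0 \<Longrightarrow> (LINT y|lborel. tent x0 r y * h y) = 0"
  shows "h x = 0"
proof -
  have "\<not> h x > 0" by (rule cont_pos[OF hc z])
  moreover have "\<not> (\<lambda>y. - h y) x > 0"
  proof (rule cont_pos[of "\<lambda>y. - h y"])
    show "continuous_on UNIV (\<lambda>y. - h y)" by (intro continuous_intros hc)
    fix x0 r :: real assume "r > 0"
    then show "(LINT y|lborel. tent x0 r y * - h y) = 0" using z[of r x0] by simp
  qed
  ultimately show ?thesis by simp
qed


lemma dist_pair_le: "dist (a::real, b::real) (c, d) \<le> \<bar>a - c\<bar> + \<bar>b - d\<bar>"
  using sqrt_sum_squares_le_sum_abs[of "a - c" "b - d"] by (simp add: dist_Pair_Pair dist_real_def)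

definition gk :: "(real \<times> real \<Rightarrow> real) \<Rightarrow> nat \<Rightarrow> real \<Rightarrow> real" where
  "gk Phi k x = (LINT s|lborel. indicator {- 1 / real k .. 1 / real k} s * Phi (x, x + s))"

lemma gk_int:
  assumes Phi: "Cc Phi" and k: "k \<ge> 1"
  shows "integrable lborel (\<lambda>s. indicator {- 1 / real k .. 1 / real k} s * Phi (x, x + s))"
proof -
  obtain B where B: "B > 0" "\<forall>z. \<bar>Phi z\<bar> \<le> B" using Cc_bounded[OF Phi] by blast
  have [measurable]: "Phi \<in> borel_measurable borel"
    using Phi unfolding Cc_def by (intro borel_measurable_continuous_onI) auto
  show ?thesis
  proof (rule int_bound(1)[where e=B and a="- 1 / real k" and b="1 / real k"])
    show "(\<lambda>s. indicator {- 1 / real k .. 1 / real k} s * Phi (x, x + s)) \<in> borel_measurable lborel"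
      by measurable
    show "\<bar>indicator {- 1 / real k .. 1 / real k} s * Phi (x, x + s)\<bar> \<le> B * indicator {- 1 / real k..1 / real k} s" for s
      using B by (auto simp: indicator_def)
    show "- 1 / real k \<le> 1 / real k" using k by simp
  qed
qed

lemma gk_cont_at:
  assumes Phi: "Cc Phi" and k: "k \<ge> 1" and e: "e > 0"
  shows "\<exists>d>0. \<forall>x'. dist x' x0 < d \<longrightarrow> dist (gk Phi k x') (gk Phi k x0) < e"
proof -
  let ?K = "cball (x0, x0) 3"
  let ?I = "{- 1 / real k .. 1 / real k}"
  have [measurable]: "Phi \<in> borel_measurable borel"
    using Phi unfolding Cc_def by (intro borel_measurable_continuous_onI) auto
  have "uniformly_continuous_on ?K Phi"
    by (rule compact_uniformly_continuous) (use Phi in \<open>auto simp: Cc_def intro: continuous_on_subset\<close>)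
  moreover have "e / 4 > 0" using e by simp
  ultimately have "\<exists>d>0. \<forall>z\<in>?K. \<forall>w\<in>?K. dist w z < d \<longrightarrow> dist (Phi w) (Phi z) < e / 4"
    unfolding uniformly_continuous_on_def by blast
  then obtain d where d: "d > 0"
    "\<And>z w. z \<in> ?K \<Longrightarrow> w \<in> ?K \<Longrightarrow> dist w z < d \<Longrightarrow> dist (Phi w) (Phi z) < e / 4"
    by blast
  show ?thesis
  proof (intro exI[of _ "min 1 (d/2)"] conjI allI impI)
    show "min 1 (d/2) > 0" using d by simp
    fix x' assume x': "dist x' x0 < min 1 (d/2)"
    have key: "\<bar>indicator ?I s * Phi (x', x' + s) - indicator ?I s * Phi (x0, x0 + s)\<bar> \<le> e / 4 * indicator ?I s" for s
    proof (cases "s \<in> ?I")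
      case True
      have k1: "1 / real k \<le> 1" using k by simp
      have s1: "\<bar>s\<bar> \<le> 1" using True k1 by auto
      have "dist (x0, x0) (x0, x0 + s) \<le> 3"
        using dist_pair_le[of x0 x0 x0 "x0 + s"] s1 by simp
      moreover have "dist (x0, x0) (x', x' + s) \<le> 3"
        using dist_pair_le[of x0 x0 x' "x' + s"] s1 x' by (simp add: dist_real_def) arith
      moreover have "dist (x', x' + s) (x0, x0 + s) < d"
        using dist_pair_le[of x' "x' + s" x0 "x0 + s"] x' by (simp add: dist_real_def)
      ultimately have "dist (Phi (x', x' + s)) (Phi (x0, x0 + s)) < e / 4"
        using d(2)[of "(x0, x0 + s)" "(x', x' + s)"] by simp
      then show ?thesis using True by (simp add: dist_real_def)
    next
      case False then show ?thesis by simp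
    qed
    have "gk Phi k x' - gk Phi k x0 =
        (LINT s|lborel. indicator ?I s * Phi (x', x' + s) - indicator ?I s * Phi (x0, x0 + s))"
      unfolding gk_def by (rule Bochner_Integration.integral_diff[symmetric, OF gk_int[OF Phi k] gk_int[OF Phi k]])
    also have "\<bar>\<dots>\<bar> \<le> e / 4 * (1 / real k - - 1 / real k)"
      by (rule int_bound(2)) (use key k in auto)
    also have "\<dots> \<le> e / 2" using k e by (simp add: field_simps)
    finally show "dist (gk Phi k x') (gk Phi k x0) < e" using e by (simp add: dist_real_def)
  qed
qed

lemma gk_cont:
  assumes Phi: "Cc Phi" and k: "k \<ge> 1"
  shows "continuous_on UNIV (gk Phi k)"
  unfolding continuous_on_iff using gk_cont_at[OF Phi k] by blast

lemma fubini_step: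
  assumes Phi: "Cc Phi" and phi: "Cc \<phi>"
  shows "(LINT z|Pi_k k. \<phi> (fst z) * Phi z) = (LINT x|lborel. \<phi> x * gk Phi k x)"
proof -
  let ?I = "{- 1 / real k .. 1 / real k}"
  have [measurable]: "Phi \<in> borel_measurable borel"
    using Phi unfolding Cc_def by (intro borel_measurable_continuous_onI) auto
  have [measurable]: "\<phi> \<in> borel_measurable borel"
    using phi unfolding Cc_def by (intro borel_measurable_continuous_onI) auto
  define F where "F z = indicator ?I (fst z - snd z) * (\<phi> (fst z) * Phi z)" for z :: "real \<times> real"
  have [measurable]: "(\<lambda>z::real\<times>real. fst z - snd z) \<in> borel_measurable borel"
    by (intro borel_measurable_continuous_onI continuous_intros)
  have [measurable]: "(\<lambda>z::real\<times>real. \<phi> (fst z) * Phi z) \<in> borel_measurable borel"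
  proof (rule borel_measurable_continuous_onI)
    have c1: "continuous_on UNIV \<phi>" "continuous_on UNIV Phi" using Phi phi unfolding Cc_def by auto
    have c2: "continuous_on UNIV (\<lambda>z::real\<times>real. \<phi> (fst z))"
      using continuous_on_compose2[OF c1(1) continuous_on_fst[OF continuous_on_id]] by simp
    show "continuous_on UNIV (\<lambda>z::real\<times>real. \<phi> (fst z) * Phi z)"
      by (rule continuous_on_mult[OF c2 c1(2)])
  qed
  have Fm[measurable]: "F \<in> borel_measurable lborel"
    unfolding F_def measurable_lborel2 by measurable
  obtain B1 where B1: "B1 > 0" "\<forall>z. \<bar>Phi z\<bar> \<le> B1" using Cc_bounded[OF Phi] by blast
  obtain B2 where B2: "B2 > 0" "\<forall>z. \<bar>\<phi> z\<bar> \<le> B2" using Cc_bounded[OF phi] by blast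
  let ?C = "closure {z. Phi z \<noteq> 0}"
  have Cc: "compact ?C" using Phi unfolding Cc_def by auto
  have ib: "integrable lborel (\<lambda>z. indicator ?C z *\<^sub>R (B2 * B1))"
    by (rule borel_integrable_compact[OF Cc]) simp
  have intF: "integrable lborel F"
  proof (rule Bochner_Integration.integrable_bound[OF ib Fm], rule AE_I2)
    fix z
    show "norm (F z) \<le> norm (indicator ?C z *\<^sub>R (B2 * B1))"
    proof (cases "z \<in> ?C")
      case True
      have h1: "\<bar>Phi z\<bar> \<le> B1" using B1(2) by (rule spec)
      have h2: "\<bar>\<phi> (fst z)\<bar> \<le> B2" using B2(2) by (rule spec)
      have h3: "\<bar>indicator ?I (fst z - snd z)\<bar> \<le> (1::real)" by (simp add: indicator_def)
      have "\<bar>F z\<bar> \<le> 1 * (B2 * B1)" unfolding F_def abs_mult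
        using B1(1) B2(1) by (intro mult_mono h1 h2 h3) auto
      then show ?thesis using True B1 B2 by simp
    next
      case False
      have "{z. Phi z \<noteq> 0} \<subseteq> ?C" by (rule closure_subset)
      then have "Phi z = 0" using False by auto
      then show ?thesis by (simp add: F_def)
    qed
  qed
  have dens: "Pi_k k = density lborel (\<lambda>z. ennreal (indicator ?I (fst z - snd z)))"
    unfolding Pi_k_def by (simp add: split_beta')
  have "(LINT z|Pi_k k. \<phi> (fst z) * Phi z) =
      (LINT z|lborel. indicator ?I (fst z - snd z) *\<^sub>R (\<phi> (fst z) * Phi z))"
    unfolding dens by (rule integral_density) auto
  also have "\<dots> = (LINT z|lborel. F z)" by (simp add: F_def)
  also have "\<dots> = (LINT z|(lborel \<Otimes>\<^sub>M lborel). F z)" by (simp add: lborel_prod)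
  also have "\<dots> = (LINT x|lborel. LINT y|lborel. F (x, y))"
    by (rule lborel_pair.integral_fst'[symmetric]) (use intF in \<open>simp add: lborel_prod\<close>)
  also have "\<dots> = (LINT x|lborel. \<phi> x * gk Phi k x)"
  proof (rule Bochner_Integration.integral_cong[OF refl])
    fix x
    have "(LINT y|lborel. F (x, y)) = (LINT y|lborel. \<phi> x * (indicator ?I (x - y) * Phi (x, y)))"
      by (simp add: F_def mult_ac)
    also have "\<dots> = \<phi> x * (LINT y|lborel. indicator ?I (x - y) * Phi (x, y))"
      by (rule integral_mult_right_zero)
    also have "(LINT y|lborel. indicator ?I (x - y) * Phi (x, y)) =
        (LINT s|lborel. indicator ?I (x - (x + 1 * s)) * Phi (x, x + 1 * s))"
      using lborel_integral_real_affine[where c=1 and t=x and f="\<lambda>y. indicator ?I (x - y) * Phi (x, y)"]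
      by simp
    also have "\<dots> = gk Phi k x" unfolding gk_def
      by (rule Bochner_Integration.integral_cong[OF refl]) (auto simp: indicator_def)
    finally show "(LINT y|lborel. F (x, y)) = \<phi> x * gk Phi k x" .
  qed
  finally show ?thesis .
qed


lemma poisson_k_cont: "continuous_on UNIV (poisson_k k)"
proof -
  have nz: "\<And>t. 1 + t^2 \<noteq> (0::real)" by (simp add: add_nonneg_eq_0_iff)
  show ?thesis unfolding poisson_k_def[abs_def] poisson_def
      by (intro continuous_intros) (auto simp: nz)
qed
lemma Kir_formula:
  fixes K g L a x :: real and k :: nat
  assumes k: "k \<ge> 1" and i: "K * poisson_k k x = g" and g: "g = 2 / real k * (L + a)"
  shows "K = 2 * pi * ((1 / real k)^2 + x^2) * (L + a)"
proof -
  have pos: "1 + (real k * x)^2 > 0" by (simp add: add_pos_nonneg)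
  have P: "poisson_k k x = real k / (pi * (1 + (real k * x)^2))"
    by (simp add: poisson_k_def poisson_def)
  define D where "D = pi * (1 + (real k * x)^2)"
  have D: "D > 0" unfolding D_def using pos by simp
  have "K * (real k / D) = g" using i unfolding P D_def .
  then have "K * real k = g * D" using D by (simp add: field_simps)
  then have "K = g * D / real k" using k by (simp add: field_simps)
  also have "\<dots> = g * (pi * (1 + (real k * x)^2)) / real k" by (simp add: D_def)
  finally have "K = g * (pi * (1 + (real k * x)^2)) / real k" .
  also have "\<dots> = 2 * pi * ((1 + (real k * x)^2) / (real k)^2) * (L + a)"
    unfolding g using k by (simp add: power2_eq_square)
  also have "(1 + (real k * x)^2) / (real k)^2 = (1 / real k)^2 + x^2"
    using k by (simp add: power_mult_distrib add_divide_distrib power_divide)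
  finally show ?thesis .
qed

lemma final_lim:
  fixes a :: "nat \<Rightarrow> real" and K :: "nat \<Rightarrow> real"
  assumes a0: "a \<longlonglongrightarrow> 0" and eqK: "\<And>k. k \<ge> 1 \<Longrightarrow> K k = 2 * pi * ((1 / real k)^2 + x^2) * (L + a k)"
  shows "K \<longlonglongrightarrow> 2 * pi * x^2 * L"
proof -
  have u0: "(\<lambda>k. (1 / real k)^2) \<longlonglongrightarrow> 0^2"
    by (intro tendsto_power lim_1_over_n)
  have u: "(\<lambda>k. (1 / real k)^2) \<longlonglongrightarrow> 0" using u0 by simp
  have lim: "(\<lambda>k. 2 * pi * ((1 / real k)^2 + x^2) * (L + a k)) \<longlonglongrightarrow> 2 * pi * (0 + x^2) * (L + 0)"
    by (intro tendsto_mult tendsto_add tendsto_const u a0)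
  have ev: "eventually (\<lambda>k. 2 * pi * ((1 / real k)^2 + x^2) * (L + a k) = K k) sequentially"
    unfolding eventually_sequentially using eqK by (intro exI[of _ 1]) auto
  have "(\<lambda>k. 2 * pi * ((1 / real k)^2 + x^2) * (L + a k)) \<longlonglongrightarrow> 2 * pi * x^2 * L"
    using lim by simp
  then show ?thesis using tendsto_cong[OF ev] by blast
qed

theorem proposition10p1:
  fixes Phi :: "real \<times> real \<Rightarrow> real"
    and Kir :: "nat \<Rightarrow> real \<Rightarrow> real"
  assumes Phi: "Cc Phi"
    and Kir_cont: "\<And>k. k \<ge> 1 \<Longrightarrow> continuous_on UNIV (Kir k)"
    and Kir_def: "\<And>k \<phi>. k \<ge> 1 \<Longrightarrow> Cc \<phi> \<Longrightarrow>
        (LINT x|lborel. \<phi> x * Kir k x * poisson_k k x)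
        = (LINT z|Pi_k k. \<phi> (fst z) * Phi z)"
  shows "\<And>x. (\<lambda>k. Kir k x) \<longlonglongrightarrow> 2 * pi * x^2 * Phi (x, x)"
proof -
  fix x :: real
  define L where "L = Phi (x, x)"
  have pos: "1 + t^2 > (0::real)" for t by (simp add: add_pos_nonneg)
  have ident: "Kir k x * poisson_k k x = gk Phi k x" if k: "k \<ge> 1" for k
  proof -
    have cPk: "continuous_on UNIV (poisson_k k)" by (rule poisson_k_cont)
    have cP: "continuous_on UNIV (\<lambda>y. Kir k y * poisson_k k y)"
      by (intro continuous_intros Kir_cont[OF k] cPk)
    have cg: "continuous_on UNIV (gk Phi k)" by (rule gk_cont[OF Phi k])
    have "(\<lambda>y. Kir k y * poisson_k k y - gk Phi k y) x = 0"
    proof (rule cont_zero[of "\<lambda>y. Kir k y * poisson_k k y - gk Phi k y"])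
      show "continuous_on UNIV (\<lambda>y. Kir k y * poisson_k k y - gk Phi k y)"
        by (intro continuous_intros cP cg)
      fix x0 r :: real assume r: "r > 0"
      have i1: "integrable lborel (\<lambda>y. tent x0 r y * (Kir k y * poisson_k k y))"
        by (rule Cc_mult_integrable[OF tent_Cc cP])
      have i2: "integrable lborel (\<lambda>y. tent x0 r y * gk Phi k y)"
        by (rule Cc_mult_integrable[OF tent_Cc cg])
      have e1: "(LINT y|lborel. tent x0 r y * (Kir k y * poisson_k k y))
          = (LINT z|Pi_k k. tent x0 r (fst z) * Phi z)"
        using Kir_def[OF k tent_Cc] by (simp add: mult.assoc)
      have e2: "(LINT z|Pi_k k. tent x0 r (fst z) * Phi z) = (LINT y|lborel. tent x0 r y * gk Phi k y)"
        by (rule fubini_step[OF Phi tent_Cc])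
      have "(LINT y|lborel. tent x0 r y * (Kir k y * poisson_k k y - gk Phi k y))
          = (LINT y|lborel. tent x0 r y * (Kir k y * poisson_k k y) - tent x0 r y * gk Phi k y)"
        by (simp add: right_diff_distrib)
      also have "\<dots> = 0"
        using Bochner_Integration.integral_diff[OF i1 i2] e1 e2 by simp
      finally show "(LINT y|lborel. tent x0 r y * (Kir k y * poisson_k k y - gk Phi k y)) = 0" .
    qed
    then show ?thesis by simp
  qed
  define a where "a k = real k / 2 * gk Phi k x - L" for k
  have [measurable]: "Phi \<in> borel_measurable borel"
    using Phi unfolding Cc_def by (intro borel_measurable_continuous_onI) auto
  have a0: "a \<longlonglongrightarrow> 0"
  proof (rule LIMSEQ_I)
    fix r :: real assume r: "r > 0"
    have "r / 2 > 0" using r by simp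
    then have "\<exists>d>0. \<forall>z\<in>UNIV. dist z (x, x) < d \<longrightarrow> dist (Phi z) (Phi (x, x)) < r / 2"
      using Phi unfolding Cc_def continuous_on_iff by blast
    then obtain d where d: "d > 0" "\<forall>z. dist z (x, x) < d \<longrightarrow> dist (Phi z) (Phi (x, x)) < r / 2"
      by blast
    obtain N :: nat where N: "N > 0" "inverse (real N) < d" using ex_inverse_of_nat_less[OF d(1)] by blast
    show "\<exists>no. \<forall>n\<ge>no. norm (a n - 0) < r"
    proof (intro exI allI impI)
      fix n assume n: "N \<le> n"
      then have n1: "n \<ge> 1" using N by simp
      have nd: "1 / real n < d"
      proof -
        have "1 / real n \<le> 1 / real N" using n N by (simp add: frac_le)
        then show ?thesis using N by (simp add: inverse_eq_divide)
      qed
      let ?I = "{- 1 / real n .. 1 / real n}"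
      have iI: "integrable lborel (\<lambda>s. indicator ?I s * L)"
        by (intro integrable_mult_left integrable_real_indicator) (auto simp: emeasure_lborel_Icc_eq)
      have intI: "(LINT s|lborel. indicator ?I s * L) = 2 / real n * L"
        using n1 by (simp add: measure_lborel_Icc)
      have "gk Phi n x - 2 / real n * L =
          (LINT s|lborel. indicator ?I s * Phi (x, x + s) - indicator ?I s * L)"
        unfolding gk_def intI[symmetric]
        by (rule Bochner_Integration.integral_diff[symmetric, OF gk_int[OF Phi n1] iI])
      also have "\<bar>\<dots>\<bar> \<le> r / 2 * (1 / real n - - 1 / real n)"
      proof (rule int_bound(2))
        show "(\<lambda>s. indicator ?I s * Phi (x, x + s) - indicator ?I s * L) \<in> borel_measurable lborel"
          by measurable
        show "- 1 / real n \<le> 1 / real n" by simp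
        fix s
        show "\<bar>indicator ?I s * Phi (x, x + s) - indicator ?I s * L\<bar> \<le> r / 2 * indicator ?I s"
        proof (cases "s \<in> ?I")
          case True
          then have "\<bar>s\<bar> \<le> 1 / real n" unfolding atLeastAtMost_iff abs_le_iff by simp
          then have "dist (x, x + s) (x, x) < d" using nd by (simp add: dist_Pair_Pair dist_real_def)
          then have "dist (Phi (x, x + s)) L < r / 2" using d(2) L_def by blast
          then show ?thesis using True by (simp add: dist_real_def)
        next
          case False then show ?thesis by simp
        qed
      qed
      finally have b0: "\<bar>gk Phi n x - 2 / real n * L\<bar> \<le> r / 2 * (1 / real n - - 1 / real n)" .
      have rn: "r / 2 * (1 / real n - - 1 / real n) = r / real n" by simp
      have b: "\<bar>gk Phi n x - 2 / real n * L\<bar> \<le> r / real n" using b0 unfolding rn .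
      have an: "a n = real n / 2 * (gk Phi n x - 2 / real n * L)"
        using n1 by (simp add: a_def field_simps)
      have "\<bar>a n\<bar> = real n / 2 * \<bar>gk Phi n x - 2 / real n * L\<bar>"
        unfolding an abs_mult by simp
      also have "\<dots> \<le> real n / 2 * (r / real n)"
        by (rule mult_left_mono[OF b]) simp
      also have "\<dots> = r / 2" using n1 by simp
      also have "\<dots> < r" using r by simp
      finally show "norm (a n - 0) < r" by simp
    qed
  qed
  have eqK: "Kir k x = 2 * pi * ((1 / real k)^2 + x^2) * (L + a k)" if k: "k \<ge> 1" for k
  proof -
    have "2 / real k * (L + a k) = (2 / real k * (real k / 2)) * gk Phi k x"
      by (simp add: a_def)
    also have "2 / real k * (real k / 2) = 1" using k by simp
    finally have g: "gk Phi k x = 2 / real k * (L + a k)" by simp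
    show ?thesis by (rule Kir_formula[OF k ident[OF k] g])
  qed
  show "(\<lambda>k. Kir k x) \<longlonglongrightarrow> 2 * pi * x^2 * Phi (x, x)"
    unfolding L_def[symmetric] by (rule final_lim[OF a0 eqK])
qed

end
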